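(* Suppose the constraint qualification below holds, let $\{(x^k,y^k,z^k)\}$ be generated by Algorithm G-ADMM-M with parameters $\sigma>0$, $\rho\in(0,2)$, and let $(\bar x,\bar y,\bar z)\in\mathbb{W}^*$. Then for every integer $k>1$, $$\sigma(2-\rho)\|\mathcal{A}^*x^k+\mathcal{B}^*y^k-c\|^2\ \ge\ \sigma(2-\rho)\|\mathcal{A}^*x^{k+1}+\mathcal{B}^*y^k-c\|^2+\frac{(2-\rho)^2}{\rho}\|x^{k+1}-x^k\|^2_{\widehat\Sigma_{f_1}+\mathcal S+\sigma\mathcal{A}\mathcal{A}^*}-(2-\rho)\|\widetilde x^k-x^k\|^2_{\widehat\Sigma_{f_1}+\mathcal S}.$$
   Context: Let $\mathbb{X},\mathbb{Y},\mathbb{Z}$ be finite-dimensional real Euclidean spaces with inner product $\langle\cdot,\cdot\rangle$ and induced norm $\|\cdot\|$. For a self-adjoint positive semidefinite linear operator $\mathcal{G}$, $\|u\|_{\mathcal G}^2:=\langle u,\mathcal G u\rangle$. Let $f_1:\mathbb{X}\to\mathbb{R}$ and $h_1:\mathbb{Y}\to\mathbb{R}$ be convex, continuously differentiable with globally Lipschitz continuous gradients, and $f_2:\mathbb{X}\to(-\infty,+\infty]$, $h_2:\mathbb{Y}\to(-\infty,+\infty]$ closed proper convex. Let $\mathcal{A}:\mathbb{Z}\to\mathbb{X}$, $\mathcal{B}:\mathbb{Z}\to\mathbb{Y}$ be linear with adjoints $\mathcal{A}^*,\mathcal{B}^*$, and $c\in\mathbb{Z}$. The problem is $\min\{f_1(x)+f_2(x)+h_1(y)+h_2(y):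 \mathcal{A}^*x+\mathcal{B}^*y=c\}$. Let $\Sigma_{f_1}\preceq\widehat\Sigma_{f_1}$ be self-adjoint positive semidefinite operators on $\mathbb{X}$ with $\tfrac12\|x-x'\|_{\Sigma_{f_1}}^2\le f_1(x)-f_1(x')-\langle x-x',\nabla f_1(x')\rangle\le\tfrac12\|x-x'\|_{\widehat\Sigma_{f_1}}^2$ for all $x,x'$, and likewise $\Sigma_{h_1}\preceq\widehat\Sigma_{h_1}$ on $\mathbb{Y}$ for $h_1$. Constraint qualification: there exists $(x^0,y^0)\in\operatorname{ri}(\operatorname{dom}f_2\times\operatorname{dom}h_2)$ with $\mathcal{A}^*x^0+\mathcal{B}^*y^0=c$. $\mathbb{W}^*$ denotes the set of $(\bar x,\bar y,\bar z)\in\mathbb{X}\times\mathbb{Y}\times\mathbb{Z}$ with $0\in\partial f_2(\bar x)+\nabla f_1(\bar x)+\mathcal{A}\bar z$, $0\in\partial h_2(\bar y)+\nabla h_1(\bar y)+\mathcal{B}\bar z$, $\mathcal{A}^*\bar x+\mathcal{B}^*\bar y=c$. Algorithm G-ADMM-M: choose $\sigma>0$, $\rho\in(0,2)$, self-adjoint positive semidefinite $\mathcal S$ on $\mathbb{X}$ and $\mathcal T$ on $\mathbb{Y}$ such that $\mathcal F:=\widehat\Sigma_{f_1}+\mathcal S+\sigma\mathcal{A}\mathcal{A}^*\succ0$ and $\mathcal H:=\widehat\Sigma_{h_1}+\mathcal T+\sigma\mathcal{B}\mathcal{B}^*\succ0$, and $\widetilde\omega^0=(\widetilde x^0,\widetilde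 y^0,\widetilde z^0)\in\operatorname{dom}f_2\times\operatorname{dom}h_2\times\mathbb{Z}$. For $k=0,1,2,\dots$: $x^k=\arg\min_x\{f_2(x)+\tfrac12\langle x,\mathcal F x\rangle+\langle\nabla f_1(\widetilde x^k)+\sigma\mathcal{A}(\mathcal{A}^*\widetilde x^k+\mathcal{B}^*\widetilde y^k-c+\sigma^{-1}\widetilde z^k)-\mathcal F\widetilde x^k,x\rangle\}$; $z^k=\widetilde z^k+\sigma(\mathcal{A}^*x^k+\mathcal{B}^*\widetilde y^k-c)$; $y^k=\arg\min_y\{h_2(y)+\tfrac12\langle y,\mathcal H y\rangle+\langle\nabla h_1(\widetilde y^k)+\sigma\mathcal{B}(\mathcal{A}^*x^k+\mathcal{B}^*\widetilde y^k-c+\sigma^{-1}z^k)-\mathcal H\widetilde y^k,y\rangle\}$; $\widetilde\omega^{k+1}=\widetilde\omega^k+\rho(\omega^k-\widetilde\omega^k)$ where $\omega^k=(x^k,y^k,z^k)$, $\widetilde\omega^k=(\widetilde x^k,\widetilde y^k,\widetilde z^k)$. *)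

theory Defs
  imports "HOL-Analysis.Analysis"
begin

definition edom :: "('a \<Rightarrow> ereal) \<Rightarrow> 'a set" where
  "edom f = {x. f x < \<infinity>}"

definition proper_fun :: "('a \<Rightarrow> ereal) \<Rightarrow> bool" where
  "proper_fun f \<longleftrightarrow> (\<forall>x. f x \<noteq> -\<infinity>) \<and> (\<exists>x. f x < \<infinity>)"

definition epigraph_e :: "('a \<Rightarrow> ereal) \<Rightarrow> ('a \<times> real) set" where
  "epigraph_e f = {(x, t). f x \<le> ereal t}"

definition closed_proper_convex :: "('a::real_normed_vector \<Rightarrow> ereal) \<Rightarrow> bool" where
  "closed_proper_convex f \<longleftrightarrow>
     proper_fun f \<and> convex (epigraph_e f) \<and> closed (epigraph_e f)"

definition subdiff :: "('a::real_inner \<Rightarrow> ereal) \<Rightarrow> 'a \<Rightarrow> 'a set" where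
  "subdiff f x = {g. f x < \<infinity> \<and> (\<forall>y. f x + ereal (inner g (y - x)) \<le> f y)}"

definition sa_psd :: "('a::real_inner \<Rightarrow> 'a) \<Rightarrow> bool" where
  "sa_psd G \<longleftrightarrow> linear G \<and> (\<forall>u v. inner (G u) v = inner u (G v)) \<and> (\<forall>u. 0 \<le> inner u (G u))"

definition pos_def :: "('a::real_inner \<Rightarrow> 'a) \<Rightarrow> bool" where
  "pos_def G \<longleftrightarrow> (\<forall>u. u \<noteq> 0 \<longrightarrow> 0 < inner u (G u))"

definition qnorm2 :: "('a::real_inner \<Rightarrow> 'a) \<Rightarrow> 'a \<Rightarrow> real" where
  "qnorm2 G u = inner u (G u)"

definition KKT_set ::
  "('x::euclidean_space \<Rightarrow> 'x) \<Rightarrow> ('x \<Rightarrow> ereal) \<Rightarrow> ('y::euclidean_space \<Rightarrow> 'y) \<Rightarrow> ('y \<Rightarrow> ereal)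
   \<Rightarrow> ('z::euclidean_space \<Rightarrow> 'x) \<Rightarrow> ('z \<Rightarrow> 'y) \<Rightarrow> 'z \<Rightarrow> ('x \<times> 'y \<times> 'z) set" where
  "KKT_set gf1 f2 gh1 h2 A B c =
     {(x, y, z). - (gf1 x + A z) \<in> subdiff f2 x \<and> - (gh1 y + B z) \<in> subdiff h2 y
        \<and> adjoint A x + adjoint B y = c}"

end

theory Submission
  imports Defs
begin


lemma small_pos:
  fixes A c :: real
  assumes "\<And>t. 0 < t \<Longrightarrow> t < 1 \<Longrightarrow> 0 \<le> A + t * c"
  shows "0 \<le> A"
proof (rule ccontr)
  assume "\<not> 0 \<le> A"
  define t where "t = min (1/2) ((- A) / (2 * (\<bar>c\<bar> + 1)))"
  have tp: "0 < t" "t < 1" using \<open>\<not> 0 \<le> A\<close> by (auto simp: t_def divide_neg_pos)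
  have pos: "0 < 2 * (\<bar>c\<bar> + 1)" by simp
  have "t \<le> (- A) / (2 * (\<bar>c\<bar> + 1))" unfolding t_def by (rule min.cobounded2)
  hence h: "t * (2 * (\<bar>c\<bar> + 1)) \<le> - A" unfolding pos_le_divide_eq[OF pos] .
  have "t * c \<le> t * \<bar>c\<bar>" using tp by (simp add: mult_left_mono)
  moreover have "t * \<bar>c\<bar> < t * (2 * (\<bar>c\<bar> + 1))" using tp by (intro mult_strict_left_mono) auto
  ultimately have "t * c < - A" using h by linarith
  with assms[OF tp] show False by linarith
qed

lemma opt_vi:
  fixes f :: "'a::real_inner \<Rightarrow> ereal" and F :: "'a \<Rightarrow> 'a"
  assumes cpc: "closed_proper_convex f" and Flin: "linear F"
    and Fsym: "\<And>u v. inner (F u) v = inner u (F v)"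
    and am: "is_arg_min (\<lambda>u. f u + ereal ((1/2) * inner u (F u) + inner b u)) (\<lambda>_. True) x"
  shows "\<bar>f x\<bar> \<noteq> \<infinity> \<and> (\<forall>u. f x + ereal (inner (F x + b) (x - u)) \<le> f u)"
proof -
  define q where "q w = (1/2) * inner w (F w) + inner b w" for w
  have min: "f x + ereal (q x) \<le> f w + ereal (q w)" for w
    using am unfolding is_arg_min_def q_def by (metis not_le)
  from cpc obtain x0 where x0: "f x0 < \<infinity>" and nm: "\<And>w. f w \<noteq> -\<infinity>"
    unfolding closed_proper_convex_def proper_fun_def by blast
  have "f x0 + ereal (q x0) < \<infinity>" using x0 by simp
  hence "f x + ereal (q x) < \<infinity>" using min[of x0] by (rule order.strict_trans1[rotated])
  hence fxfin: "f x \<noteq> \<infinity>" by auto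
  then obtain fx where fx: "f x = ereal fx" using nm[of x] by (cases "f x") auto
  have cvx: "convex (epigraph_e f)" using cpc unfolding closed_proper_convex_def by blast
  have "f x + ereal (inner (F x + b) (x - u)) \<le> f u" for u
  proof (cases "f u")
    case PInf then show ?thesis by simp
  next
    case MInf then show ?thesis using nm by simp
  next
    case (real fu)
    define d where "d = u - x"
    have qexp: "q (x + t *\<^sub>R d) = q x + t * inner (F x + b) d + t^2/2 * inner d (F d)" for t
    proof -
      have "F (x + t *\<^sub>R d) = F x + t *\<^sub>R F d" using Flin by (simp add: linear_add linear_scale)
      moreover have "inner x (F d) = inner (F x) d" using Fsym by simp
      ultimately show ?thesis unfolding q_def
        by (simp add: inner_add_left inner_add_right algebra_simps power2_eq_square inner_commute)
    qed
    have key: "0 \<le> (fu - fx + inner (F x + b) d) + t * (inner d (F d) / 2)" if t: "0 < t" "t < 1" for t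
    proof -
      have e1: "(x, fx) \<in> epigraph_e f" "(u, fu) \<in> epigraph_e f" using fx real by (auto simp: epigraph_e_def)
      have "(1 - t) *\<^sub>R (x, fx) + t *\<^sub>R (u, fu) \<in> epigraph_e f"
        by (rule convexD[OF cvx e1]) (use t in auto)
      moreover have "(1 - t) *\<^sub>R x + t *\<^sub>R u = x + t *\<^sub>R d" by (simp add: d_def algebra_simps)
      ultimately have "f (x + t *\<^sub>R d) \<le> ereal ((1 - t) * fx + t * fu)" by (simp add: epigraph_e_def)
      hence "f (x + t *\<^sub>R d) + ereal (q (x + t *\<^sub>R d)) \<le> ereal ((1 - t) * fx + t * fu + q (x + t *\<^sub>R d))"
        by (metis add_right_mono plus_ereal.simps(1))
      from order_trans[OF min[of "x + t *\<^sub>R d"] this] fx have "fx + q x \<le> (1 - t) * fx + t * fu + q (x + t *\<^sub>R d)" by simp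
      hence "0 \<le> t * ((fu - fx + inner (F x + b) d) + t * (inner d (F d) / 2))"
        unfolding qexp by (simp add: algebra_simps power2_eq_square)
      thus ?thesis using t by (simp add: zero_le_mult_iff)
    qed
    have "0 \<le> fu - fx + inner (F x + b) d" by (rule small_pos[OF key])
    thus ?thesis using real fx by (simp add: d_def inner_diff_right)
  qed
  thus ?thesis using fx by simp
qed

lemma grad_ineq:
  fixes f :: "'a::real_inner \<Rightarrow> real"
  assumes b: "\<And>u v. (1/2) * qnorm2 Sf (u - v) \<le> f u - f v - inner (u - v) (g v)
                         \<and> f u - f v - inner (u - v) (g v) \<le> (1/2) * qnorm2 Sh (u - v)"
    and psd: "sa_psd Sf"
  shows "inner (g p - g q) (p - s) \<ge> -(1/2) * qnorm2 Sh (s - q)"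
proof -
  have n: "0 \<le> qnorm2 Sf w" for w using psd by (simp add: sa_psd_def qnorm2_def)
  have a: "f s - f q - inner (s - q) (g q) \<le> (1/2) * qnorm2 Sh (s - q)" using b by blast
  have bb: "0 \<le> f s - f p - inner (s - p) (g p)" using b[of s p] n[of "s - p"] by linarith
  have c: "0 \<le> f p - f q - inner (p - q) (g q)" using b[of p q] n[of "p - q"] by linarith
  have "inner (g p - g q) (p - s) = inner (s - q) (g q) - inner (s - p) (g p) - inner (p - q) (g q)"
    by (simp add: inner_diff_left inner_diff_right inner_commute[of "g p"] inner_commute[of "g q"])
  thus ?thesis using a bb c by linarith
qed



theorem lemma6:
  fixes f1 :: "'x::euclidean_space \<Rightarrow> real" and gf1 :: "'x \<Rightarrow> 'x" and f2 :: "'x \<Rightarrow> ereal"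
    and h1 :: "'y::euclidean_space \<Rightarrow> real" and gh1 :: "'y \<Rightarrow> 'y" and h2 :: "'y \<Rightarrow> ereal"
    and A :: "'z::euclidean_space \<Rightarrow> 'x" and B :: "'z \<Rightarrow> 'y" and c :: 'z
    and Sf Sfh S :: "'x \<Rightarrow> 'x" and Sh Shh T :: "'y \<Rightarrow> 'y"
    and \<sigma> \<rho> :: real
    and x xt :: "nat \<Rightarrow> 'x" and y yt :: "nat \<Rightarrow> 'y" and z zt :: "nat \<Rightarrow> 'z"
    and xb :: 'x and yb :: 'y and zb :: 'z
  assumes f1_cvx: "convex_on UNIV f1"
    and f1_grad: "\<And>u. (f1 has_derivative (\<lambda>h. inner (gf1 u) h)) (at u)"
    and f1_lip: "\<exists>L. \<forall>u v. norm (gf1 u - gf1 v) \<le> L * norm (u - v)"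
    and h1_cvx: "convex_on UNIV h1"
    and h1_grad: "\<And>u. (h1 has_derivative (\<lambda>h. inner (gh1 u) h)) (at u)"
    and h1_lip: "\<exists>L. \<forall>u v. norm (gh1 u - gh1 v) \<le> L * norm (u - v)"
    and f2_cpc: "closed_proper_convex f2"
    and h2_cpc: "closed_proper_convex h2"
    and A_lin: "linear A" and B_lin: "linear B"
    and Sf_psd: "sa_psd Sf" and Sfh_psd: "sa_psd Sfh" and Sf_le: "\<And>u. qnorm2 Sf u \<le> qnorm2 Sfh u"
    and f1_bounds: "\<And>u v. (1/2) * qnorm2 Sf (u - v) \<le> f1 u - f1 v - inner (u - v) (gf1 v)
                         \<and> f1 u - f1 v - inner (u - v) (gf1 v) \<le> (1/2) * qnorm2 Sfh (u - v)"
    and Sh_psd: "sa_psd Sh" and Shh_psd: "sa_psd Shh" and Sh_le: "\<And>u. qnorm2 Sh u \<le> qnorm2 Shh u"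
    and h1_bounds: "\<And>u v. (1/2) * qnorm2 Sh (u - v) \<le> h1 u - h1 v - inner (u - v) (gh1 v)
                         \<and> h1 u - h1 v - inner (u - v) (gh1 v) \<le> (1/2) * qnorm2 Shh (u - v)"
    and CQ: "\<exists>x0 y0. (x0, y0) \<in> rel_interior (edom f2 \<times> edom h2) \<and> adjoint A x0 + adjoint B y0 = c"
    and sigma_pos: "\<sigma> > 0" and rho_pos: "0 < \<rho>" and rho_lt: "\<rho> < 2"
    and S_psd: "sa_psd S" and T_psd: "sa_psd T"
    and F_pd: "pos_def (\<lambda>u. Sfh u + S u + \<sigma> *\<^sub>R A (adjoint A u))"
    and H_pd: "pos_def (\<lambda>u. Shh u + T u + \<sigma> *\<^sub>R B (adjoint B u))"
    and init: "xt 0 \<in> edom f2" "yt 0 \<in> edom h2"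
    and x_step: "\<And>k. is_arg_min
        (\<lambda>u. f2 u + ereal ((1/2) * inner u (Sfh u + S u + \<sigma> *\<^sub>R A (adjoint A u))
           + inner (gf1 (xt k) + \<sigma> *\<^sub>R A (adjoint A (xt k) + adjoint B (yt k) - c + (1/\<sigma>) *\<^sub>R zt k)
                    - (Sfh (xt k) + S (xt k) + \<sigma> *\<^sub>R A (adjoint A (xt k)))) u))
        (\<lambda>_. True) (x k)"
    and z_step: "\<And>k. z k = zt k + \<sigma> *\<^sub>R (adjoint A (x k) + adjoint B (yt k) - c)"
    and y_step: "\<And>k. is_arg_min
        (\<lambda>v. h2 v + ereal ((1/2) * inner v (Shh v + T v + \<sigma> *\<^sub>R B (adjoint B v))
           + inner (gh1 (yt k) + \<sigma> *\<^sub>R B (adjoint A (x k) + adjoint B (yt k) - c + (1/\<sigma>) *\<^sub>R z k)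
                    - (Shh (yt k) + T (yt k) + \<sigma> *\<^sub>R B (adjoint B (yt k)))) v))
        (\<lambda>_. True) (y k)"
    and relax: "\<And>k. xt (Suc k) = xt k + \<rho> *\<^sub>R (x k - xt k)"
               "\<And>k. yt (Suc k) = yt k + \<rho> *\<^sub>R (y k - yt k)"
               "\<And>k. zt (Suc k) = zt k + \<rho> *\<^sub>R (z k - zt k)"
    and sol: "(xb, yb, zb) \<in> KKT_set gf1 f2 gh1 h2 A B c"
    and k_gt: "(k::nat) > 1"
  shows "\<sigma> * (2 - \<rho>) * (norm (adjoint A (x k) + adjoint B (y k) - c))\<^sup>2
       \<ge> \<sigma> * (2 - \<rho>) * (norm (adjoint A (x (Suc k)) + adjoint B (y k) - c))\<^sup>2
         + (2 - \<rho>)\<^sup>2 / \<rho> * qnorm2 (\<lambda>u. Sfh u + S u + \<sigma> *\<^sub>R A (adjoint A u)) (x (Suc k) - x k)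
         - (2 - \<rho>) * qnorm2 (\<lambda>u. Sfh u + S u) (xt k - x k)"
proof -
  have Alin: "linear A" by fact
  have Aslin: "linear (adjoint A)" by (rule adjoint_linear[OF A_lin])
  have Bslin: "linear (adjoint B)" by (rule adjoint_linear[OF B_lin])
  have Sfhlin: "linear Sfh" and Sfhsym: "\<And>u v. inner (Sfh u) v = inner u (Sfh v)"
    and Sfhnn: "\<And>u. 0 \<le> inner u (Sfh u)" using Sfh_psd by (auto simp: sa_psd_def)
  have Slin: "linear S" and Ssym: "\<And>u v. inner (S u) v = inner u (S v)"
    and Snn: "\<And>u. 0 \<le> inner u (S u)" using S_psd by (auto simp: sa_psd_def)
  define G where "G u = Sfh u + S u" for u
  define Fop where "Fop u = Sfh u + S u + \<sigma> *\<^sub>R A (adjoint A u)" for u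
  have AA: "inner (A (adjoint A u)) v = inner (adjoint A u) (adjoint A v)" for u v
    using adjoint_works[OF A_lin, of "adjoint A u" v] by simp
  have Glin: "linear G"
  proof (rule linearI)
    fix u v show "G (u + v) = G u + G v" unfolding G_def
      by (simp add: linear_add[OF Sfhlin] linear_add[OF Slin] add_ac)
  next
    fix r u show "G (r *\<^sub>R u) = r *\<^sub>R G u" unfolding G_def
      by (simp add: linear_scale[OF Sfhlin] linear_scale[OF Slin] scaleR_add_right)
  qed
  have Gsym: "inner (G u) v = inner u (G v)" for u v
    unfolding G_def inner_add_left inner_add_right Sfhsym Ssym ..
  have Flin: "linear Fop"
  proof (rule linearI)
    fix u v show "Fop (u + v) = Fop u + Fop v" unfolding Fop_def
      by (simp add: linear_add[OF Sfhlin] linear_add[OF Slin] linear_add[OF Aslin] linear_add[OF A_lin] scaleR_add_right add_ac)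
  next
    fix r u show "Fop (r *\<^sub>R u) = r *\<^sub>R Fop u" unfolding Fop_def
      by (simp add: linear_scale[OF Sfhlin] linear_scale[OF Slin] linear_scale[OF Aslin] linear_scale[OF A_lin] scaleR_add_right)
  qed
  have AA2: "inner u (A (adjoint A v)) = inner (adjoint A u) (adjoint A v)" for u v
    using AA[of v u] by (simp add: inner_commute)
  have Fsym: "inner (Fop u) v = inner u (Fop v)" for u v
    unfolding Fop_def inner_add_left inner_add_right inner_scaleR_left inner_scaleR_right AA AA2 Sfhsym Ssym ..
  define b where "b k = gf1 (xt k) + \<sigma> *\<^sub>R A (adjoint A (xt k) + adjoint B (yt k) - c + (1/\<sigma>) *\<^sub>R zt k)
                    - (Sfh (xt k) + S (xt k) + \<sigma> *\<^sub>R A (adjoint A (xt k)))" for k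
  have am: "is_arg_min (\<lambda>u. f2 u + ereal ((1/2) * inner u (Fop u) + inner (b k) u)) (\<lambda>_. True) (x k)" for k
    using x_step[of k] by (simp add: Fop_def b_def)
  note vi = opt_vi[OF f2_cpc Flin Fsym am]
  have E: "Fop (x k) + b k = gf1 (xt k) + G (x k - xt k) + A (z k)" for k
  proof -
    have e1: "A (z k) = A (zt k) + \<sigma> *\<^sub>R (A (adjoint A (x k)) + A (adjoint B (yt k)) - A c)"
      unfolding z_step using A_lin by (simp add: linear_add linear_diff linear_scale)
    have e2: "A (adjoint A (xt k) + adjoint B (yt k) - c + (1/\<sigma>) *\<^sub>R zt k)
        = A (adjoint A (xt k)) + A (adjoint B (yt k)) - A c + (1/\<sigma>) *\<^sub>R A (zt k)"
      using A_lin by (simp add: linear_add linear_diff linear_scale)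
    have e3: "G (x k - xt k) = Sfh (x k) + S (x k) - Sfh (xt k) - S (xt k)"
      unfolding G_def using Sfhlin Slin by (simp add: linear_diff)
    have s1: "\<sigma> *\<^sub>R ((1/\<sigma>) *\<^sub>R A (zt k)) = A (zt k)" using sigma_pos by simp
    show ?thesis unfolding Fop_def b_def e1 e2 e3 scaleR_add_right scaleR_diff_right s1
      by (simp add: algebra_simps)
  qed
  define D where "D = x (Suc k) - x k"
  define a where "a = x k - xt k"
  define u where "u = adjoint A (x k) + adjoint B (y k) - c"
  define v where "v = adjoint A (x (Suc k)) + adjoint B (y k) - c"
  define d where "d = adjoint A D"
  have vud: "v = u + d" unfolding u_def v_def d_def D_def using Aslin by (simp add: linear_diff algebra_simps)
  obtain r0 where r0: "f2 (x k) = ereal r0" using vi[of k] by (cases "f2 (x k)") auto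
  obtain r1 where r1: "f2 (x (Suc k)) = ereal r1" using vi[of "Suc k"] by (cases "f2 (x (Suc k))") auto
  have m0: "r0 + inner (Fop (x k) + b k) (x k - x (Suc k)) \<le> r1"
    using vi[of k] r0 r1 by (metis plus_ereal.simps(1) ereal_less_eq(3))
  have m1: "r1 + inner (Fop (x (Suc k)) + b (Suc k)) (x (Suc k) - x k) \<le> r0"
    using vi[of "Suc k"] r0 r1 by (metis plus_ereal.simps(1) ereal_less_eq(3))
  have mono: "inner ((Fop (x (Suc k)) + b (Suc k)) - (Fop (x k) + b k)) D \<le> 0"
  proof -
    have "inner (Fop (x k) + b k) (x k - x (Suc k)) = - inner (Fop (x k) + b k) D"
      unfolding D_def by (simp add: inner_diff_right)
    thus ?thesis using m0 m1 unfolding D_def by (simp add: inner_diff_left)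
  qed
  define Gr where "Gr = inner (gf1 (xt (Suc k)) - gf1 (xt k)) D"
  have zdiff: "z (Suc k) - z k = \<sigma> *\<^sub>R (v - (1 - \<rho>) *\<^sub>R u)"
  proof -
    have hb: "adjoint B (yt (Suc k)) = adjoint B (yt k) + \<rho> *\<^sub>R (adjoint B (y k) - adjoint B (yt k))"
      unfolding relax(2) using Bslin by (simp add: linear_add linear_diff linear_scale)
    show ?thesis unfolding z_step relax(3) u_def v_def hb
      by (simp add: algebra_simps)
  qed
  have xdiff: "x (Suc k) - xt (Suc k) = D + (1 - \<rho>) *\<^sub>R a"
    unfolding D_def a_def relax(1) by (simp add: algebra_simps)
  have t3: "inner (A (z (Suc k) - z k)) D = \<sigma> * (inner v d - (1 - \<rho>) * inner u d)"
  proof -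
    have "inner (A (z (Suc k) - z k)) D = inner (z (Suc k) - z k) d"
      using adjoint_works[OF A_lin, of "z (Suc k) - z k" D] unfolding d_def by simp
    also have "\<dots> = \<sigma> * (inner v d - (1 - \<rho>) * inner u d)"
      unfolding zdiff by (simp add: inner_diff_left)
    finally show ?thesis .
  qed
  have t2: "inner (G (x (Suc k) - xt (Suc k)) - G a) D = inner D (G D) - \<rho> * inner (G a) D"
  proof -
    have "G (D + (1 - \<rho>) *\<^sub>R a) = G D + (1 - \<rho>) *\<^sub>R G a"
      by (simp add: linear_add[OF Glin] linear_scale[OF Glin])
    thus ?thesis unfolding xdiff inner_diff_left
      by (simp only: inner_add_left inner_diff_left inner_scaleR_left inner_commute[of "G D" D]) (simp add: algebra_simps)
  qed
  have monoS: "Gr + (inner D (G D) - \<rho> * inner (G a) D) + \<sigma> * (inner v d - (1 - \<rho>) * inner u d) \<le> 0"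
  proof -
    have "(Fop (x (Suc k)) + b (Suc k)) - (Fop (x k) + b k)
       = (gf1 (xt (Suc k)) - gf1 (xt k)) + (G (x (Suc k) - xt (Suc k)) - G a) + A (z (Suc k) - z k)"
      unfolding E a_def using A_lin by (simp add: linear_diff algebra_simps)
    thus ?thesis using mono t2 t3 unfolding Gr_def by (simp add: inner_add_left)
  qed
  have gr: "Gr \<ge> -(\<rho>/2) * inner (a - D) (G (a - D))"
  proof -
    have xtd: "xt (Suc k) - xt k = \<rho> *\<^sub>R a" unfolding relax(1) a_def by simp
    have "inner (gf1 (xt (Suc k)) - gf1 (xt k)) (xt (Suc k) - (xt (Suc k) - \<rho> *\<^sub>R D))
        \<ge> -(1/2) * qnorm2 Sfh ((xt (Suc k) - \<rho> *\<^sub>R D) - xt k)"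
      by (rule grad_ineq[OF f1_bounds Sf_psd])
    moreover have "(xt (Suc k) - \<rho> *\<^sub>R D) - xt k = \<rho> *\<^sub>R (a - D)"
      using xtd by (simp add: algebra_simps)
    moreover have "qnorm2 Sfh (\<rho> *\<^sub>R (a - D)) = \<rho>^2 * qnorm2 Sfh (a - D)"
      unfolding qnorm2_def using Sfhlin by (simp add: linear_scale power2_eq_square)
    ultimately have "\<rho> * Gr \<ge> -(1/2) * (\<rho>^2 * qnorm2 Sfh (a - D))"
      unfolding Gr_def by simp
    hence "\<rho> * (-(\<rho>/2) * qnorm2 Sfh (a - D)) \<le> \<rho> * Gr"
      by (simp add: power2_eq_square algebra_simps)
    hence g1: "-(\<rho>/2) * qnorm2 Sfh (a - D) \<le> Gr" using rho_pos by (simp only: mult_le_cancel_left_pos)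
    have "qnorm2 Sfh (a - D) \<le> inner (a - D) (G (a - D))"
      unfolding qnorm2_def G_def using Snn[of "a - D"] by (simp add: inner_add_right)
    hence "(\<rho>/2) * qnorm2 Sfh (a - D) \<le> (\<rho>/2) * inner (a - D) (G (a - D))"
      using rho_pos by (intro mult_left_mono) auto
    thus ?thesis using g1 by linarith
  qed
  have GaD: "inner (a - D) (G (a - D)) = inner a (G a) - 2 * inner (G a) D + inner D (G D)"
  proof -
    have "G (a - D) = G a - G D" by (simp add: linear_diff[OF Glin])
    moreover have "inner a (G D) = inner (G a) D" using Gsym[of a D] by simp
    moreover have "inner D (G a) = inner (G a) D" by (simp add: inner_commute)
    ultimately show ?thesis by (simp add: inner_diff_left inner_diff_right)
  qed
  have qF: "qnorm2 (\<lambda>u. Sfh u + S u + \<sigma> *\<^sub>R A (adjoint A u)) (x (Suc k) - x k) = inner D (G D) + \<sigma> * inner d d"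
    unfolding qnorm2_def D_def[symmetric] d_def G_def by (simp add: inner_add_right AA2)
  have qG: "qnorm2 (\<lambda>u. Sfh u + S u) (xt k - x k) = inner a (G a)"
  proof -
    have "xt k - x k = - a" by (simp add: a_def)
    moreover have "G (- a) = - G a" by (simp add: linear_neg[OF Glin])
    ultimately show ?thesis unfolding qnorm2_def G_def[symmetric] by simp
  qed
  have nu: "(norm (adjoint A (x k) + adjoint B (y k) - c))\<^sup>2 = inner u u"
    unfolding u_def by (simp add: power2_norm_eq_inner)
  have nv: "(norm (adjoint A (x (Suc k)) + adjoint B (y k) - c))\<^sup>2 = inner u u + 2 * inner u d + inner d d"
    unfolding v_def[symmetric] vud by (simp add: power2_norm_eq_inner inner_add_left inner_add_right inner_commute[of d u])
  have vd: "inner v d = inner u d + inner d d" unfolding vud by (simp add: inner_add_left)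
  define U where "U = inner u u"
  define DD where "DD = inner d d"
  define ud where "ud = inner u d"
  define gD where "gD = inner D (G D)"
  define gA where "gA = inner a (G a)"
  define gaD where "gaD = inner (G a) D"
  have M: "Gr + (gD - \<rho> * gaD) + \<sigma> * (ud + DD - (1 - \<rho>) * ud) \<le> 0"
    using monoS unfolding vd gD_def gaD_def ud_def DD_def .
  have R: "Gr \<ge> -(\<rho>/2) * (gA - 2 * gaD + gD)" using gr unfolding GaD gA_def gaD_def gD_def .
  have K: "\<sigma> * \<rho> * ud + \<sigma> * DD \<le> (\<rho>/2) * gA + (\<rho>/2 - 1) * gD"
  proof -
    have e1: "\<sigma> * (ud + DD - (1 - \<rho>) * ud) = \<sigma> * \<rho> * ud + \<sigma> * DD" by (simp add: algebra_simps)
    have e2: "-(\<rho>/2) * (gA - 2 * gaD + gD) = -((\<rho>/2) * gA) + \<rho> * gaD - (\<rho>/2) * gD" by (simp add: algebra_simps)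
    have e3: "(\<rho>/2 - 1) * gD = (\<rho>/2) * gD - gD" by (simp add: algebra_simps)
    have m: "Gr + (gD - \<rho> * gaD) + (\<sigma> * \<rho> * ud + \<sigma> * DD) \<le> 0" using M unfolding e1 .
    have r: "-((\<rho>/2) * gA) + \<rho> * gaD - (\<rho>/2) * gD \<le> Gr" using R unfolding e2 .
    obtain P Q W X Y where "P = \<sigma> * \<rho> * ud" "Q = \<sigma> * DD" "W = (\<rho>/2) * gA" "X = \<rho> * gaD" "Y = (\<rho>/2) * gD" by blast
    with m r show ?thesis unfolding e3 by linarith
  qed
  define Br where "Br = -2 * \<sigma> * ud - \<sigma> * DD - (2 - \<rho>) / \<rho> * (gD + \<sigma> * DD) + gA"
  have "\<rho> * Br = -2 * (\<sigma> * \<rho> * ud) - \<rho> * \<sigma> * DD - (2 - \<rho>) * (gD + \<sigma> * DD) + \<rho> * gA"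
  proof -
    have "\<rho> * ((2 - \<rho>) / \<rho> * (gD + \<sigma> * DD)) = (2 - \<rho>) * (gD + \<sigma> * DD)" using rho_pos by simp
    thus ?thesis unfolding Br_def by (simp add: right_diff_distrib distrib_left mult.assoc mult.left_commute)
  qed
  also have "\<dots> \<ge> 0" using K by (simp add: algebra_simps)
  finally have "0 \<le> \<rho> * Br" .
  hence Bp: "0 \<le> Br" using rho_pos by (simp add: zero_le_mult_iff)
  have "0 \<le> (2 - \<rho>) * Br" using Bp rho_lt by simp
  moreover have "(2 - \<rho>) * Br = \<sigma> * (2 - \<rho>) * U - (\<sigma> * (2 - \<rho>) * (U + 2 * ud + DD)
         + (2 - \<rho>)\<^sup>2 / \<rho> * (gD + \<sigma> * DD) - (2 - \<rho>) * gA)"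
    unfolding Br_def by (simp add: algebra_simps power2_eq_square)
  ultimately show ?thesis unfolding nu nv qF qG U_def[symmetric] ud_def[symmetric] DD_def[symmetric]
    gD_def[symmetric] gA_def[symmetric] by linarith
qed


end
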